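(* Let $0\le\theta_1\le\theta_2\le\theta_3\le\theta_4<2\pi$ with $\theta_4-\theta_3\neq\theta_2-\theta_1$, and on $(\mathbb C^2)^{\otimes3}$ define $|\Phi_1\rangle=|000\rangle+e^{i\theta_1}|111\rangle$, $|\Phi_2\rangle=|001\rangle+e^{i\theta_2}|110\rangle$, $|\Phi_3\rangle=|010\rangle+e^{i\theta_3}|101\rangle$, $|\Phi_4\rangle=|011\rangle+e^{i\theta_4}|100\rangle$, and $|\Psi_k\rangle$ the same vectors with the plus signs replaced by minus signs ($k=1,\dots,4$). Then: (i) the orthogonal complement of $\mathrm{span}\{|\Phi_k\rangle\}$ equals $\mathrm{span}\{|\Psi_k\rangle\}$, and neither $\mathrm{span}\{|\Phi_k\rangle\}$ nor $\mathrm{span}\{|\Psi_k\rangle\}$ contains a nonzero fully product vector $|a\rangle|b\rangle|c\rangle$ (so both $\{|\Phi_k\rangle\}$ and $\{|\Psi_k\rangle\}$ are unextendible bases); (ii) the set $\{|\Phi_1\rangle,\dots,|\Phi_4\rangle\}$ (normalized) is perfectly distinguishable by LOCC among the three parties.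
   Context: A set $T$ of linearly independent pure states is an unextendible basis if the orthogonal complement of $\mathrm{span}(T)$ contains no nonzero fully product vector. "Perfectly distinguishable by LOCC": a finite-round protocol of local measurements with broadcast outcomes identifies the given state with probability 1. *)

theory Defs
  imports Complex_Main
begin

text \<open>Three-qubit state space (C^2)^{\<otimes>3}: a vector is a function on basis labels
  (x,y,z), where False stands for |0> and True for |1>.\<close>

type_synonym qstate = "bool \<times> bool \<times> bool \<Rightarrow> complex"

text \<open>Local operator on one qubit (2x2 complex matrix), indexed by (row, column).\<close>
type_synonym qop = "bool \<Rightarrow> bool \<Rightarrow> complex"

definition ket3 :: "bool \<Rightarrow> bool \<Rightarrow> bool \<Rightarrow> qstate" where
  "ket3 a b c = (\<lambda>v. if v = (a, b, c) then 1 else 0)"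

definition vadd :: "qstate \<Rightarrow> qstate \<Rightarrow> qstate" where
  "vadd u v = (\<lambda>i. u i + v i)"

definition vscale :: "complex \<Rightarrow> qstate \<Rightarrow> qstate" where
  "vscale c u = (\<lambda>i. c * u i)"

definition zvec :: qstate where
  "zvec = (\<lambda>_. 0)"

definition vinner :: "qstate \<Rightarrow> qstate \<Rightarrow> complex" where
  "vinner x y = (\<Sum>i\<in>UNIV. cnj (x i) * y i)"

definition eith :: "real \<Rightarrow> complex" where
  "eith t = exp (\<i> * complex_of_real t)"

definition Phi :: "(nat \<Rightarrow> real) \<Rightarrow> nat \<Rightarrow> qstate" where
  "Phi \<theta> k =
    (if k = 1 then vadd (ket3 False False False) (vscale (eith (\<theta> 1)) (ket3 True True True))
     else if k = 2 then vadd (ket3 False False True) (vscale (eith (\<theta> 2)) (ket3 True True False))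
     else if k = 3 then vadd (ket3 False True False) (vscale (eith (\<theta> 3)) (ket3 True False True))
     else if k = 4 then vadd (ket3 False True True) (vscale (eith (\<theta> 4)) (ket3 True False False))
     else zvec)"

definition Psi :: "(nat \<Rightarrow> real) \<Rightarrow> nat \<Rightarrow> qstate" where
  "Psi \<theta> k =
    (if k = 1 then vadd (ket3 False False False) (vscale (- eith (\<theta> 1)) (ket3 True True True))
     else if k = 2 then vadd (ket3 False False True) (vscale (- eith (\<theta> 2)) (ket3 True True False))
     else if k = 3 then vadd (ket3 False True False) (vscale (- eith (\<theta> 3)) (ket3 True False True))
     else if k = 4 then vadd (ket3 False True True) (vscale (- eith (\<theta> 4)) (ket3 True False False))
     else zvec)"

definition span4 :: "(nat \<Rightarrow> qstate) \<Rightarrow> qstate set" where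
  "span4 v = {x. \<exists>c :: nat \<Rightarrow> complex. x = (\<lambda>i. \<Sum>k\<in>{1..4}. c k * v k i)}"

definition lin_indep4 :: "(nat \<Rightarrow> qstate) \<Rightarrow> bool" where
  "lin_indep4 v \<longleftrightarrow> (\<forall>c :: nat \<Rightarrow> complex.
      (\<lambda>i. \<Sum>k\<in>{1..4}. c k * v k i) = zvec \<longrightarrow> (\<forall>k\<in>{1..4}. c k = 0))"

definition orth_compl :: "qstate set \<Rightarrow> qstate set" where
  "orth_compl S = {y. \<forall>x\<in>S. vinner x y = 0}"

definition prodvec :: "(bool \<Rightarrow> complex) \<Rightarrow> (bool \<Rightarrow> complex) \<Rightarrow> (bool \<Rightarrow> complex) \<Rightarrow> qstate" where
  "prodvec a b c = (\<lambda>(x, y, z). a x * b y * c z)"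

definition is_fully_product :: "qstate \<Rightarrow> bool" where
  "is_fully_product v \<longleftrightarrow> (\<exists>a b c. v = prodvec a b c)"

definition unextendible_basis4 :: "(nat \<Rightarrow> qstate) \<Rightarrow> bool" where
  "unextendible_basis4 v \<longleftrightarrow> lin_indep4 v \<and>
     (\<forall>w\<in>orth_compl (span4 v). is_fully_product w \<longrightarrow> w = zvec)"

definition apply_local :: "nat \<Rightarrow> qop \<Rightarrow> qstate \<Rightarrow> qstate" where
  "apply_local p K \<psi> = (\<lambda>(x, y, z).
     if p = 0 then (\<Sum>x'\<in>UNIV. K x x' * \<psi> (x', y, z))
     else if p = 1 then (\<Sum>y'\<in>UNIV. K y y' * \<psi> (x, y', z))
     else (\<Sum>z'\<in>UNIV. K z z' * \<psi> (x, y, z')))"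

definition complete_meas :: "qop list \<Rightarrow> bool" where
  "complete_meas Ks \<longleftrightarrow> Ks \<noteq> [] \<and>
     (\<forall>i j. (\<Sum>m<length Ks. \<Sum>r\<in>UNIV. cnj ((Ks ! m) r i) * (Ks ! m) r j) = (if i = j then 1 else 0))"

text \<open>Finite-round LOCC protocol tree: at each node a party performs a local measurement,
  the outcome is broadcast, and the protocol continues in the subtree for that outcome.\<close>
datatype locc = Guess nat | Meas nat "(qop \<times> locc) list"

fun wf_locc :: "locc \<Rightarrow> bool" where
  "wf_locc (Guess g) = True"
| "wf_locc (Meas p bs) \<longleftrightarrow> p < 3 \<and> complete_meas (map fst bs) \<and>
     (\<forall>(K, c)\<in>set bs. wf_locc c)"

text \<open>The protocol run on (unnormalised post-measurement) state psi with true label k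
  always answers k: every leaf reached with nonzero probability (i.e. with nonzero
  post-measurement vector) carries guess k.\<close>
fun locc_identifies :: "locc \<Rightarrow> nat \<Rightarrow> qstate \<Rightarrow> bool" where
  "locc_identifies (Guess g) k \<psi> \<longleftrightarrow> (\<psi> = zvec \<or> g = k)"
| "locc_identifies (Meas p bs) k \<psi> \<longleftrightarrow>
     (\<forall>(K, c)\<in>set bs. locc_identifies c k (apply_local p K \<psi>))"

definition perfectly_LOCC_distinguishable :: "nat set \<Rightarrow> (nat \<Rightarrow> qstate) \<Rightarrow> bool" where
  "perfectly_LOCC_distinguishable I v \<longleftrightarrow>
     (\<exists>P. wf_locc P \<and> (\<forall>k\<in>I. locc_identifies P k (v k)))"

end

theory Submission imports Defs begin

lemma eith_cis: "eith t = cis t" by (simp add: eith_def cis_conv_exp)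

lemma eith_unit: "cnj (eith t) * eith t = 1"
  by (simp add: eith_cis cis_cnj cis_mult)

lemma eith_ne: "e1 * e4 \<noteq> e2 * e3"
  if "e1 = eith a" "e2 = eith b" "e3 = eith c" "e4 = eith d"
     "0 \<le> a" "a \<le> b" "b \<le> c" "c \<le> d" "d < 2*pi" "d - c \<noteq> b - a"
proof
  assume h: "e1 * e4 = e2 * e3"
  have "cis (a + d) = cis (b + c)" using h that(1-4) by (simp add: eith_cis cis_mult)
  hence "cis (a + d) / cis (b + c) = 1" by simp
  hence "cis (a + d - (b + c)) = 1" by (simp add: cis_divide)
  hence "cos (a + d - (b + c)) = 1" by (metis cis.simps(1) one_complex.simps(1))
  then obtain n :: int where n: "a + d - (b + c) = n * 2 * pi" by (auto simp: cos_one_2pi_int)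
  have "\<bar>a + d - (b + c)\<bar> < 2 * pi" using that(5-9) by auto
  hence "\<bar>real_of_int n\<bar> < 1" using n pi_gt_zero
    by (simp add: abs_mult)
  hence "n = 0" by linarith
  thus False using n that(10) by simp
qed

lemma sum14: "(\<Sum>k\<in>{1..4::nat}. f k) = f 1 + f 2 + f 3 + f 4"
proof -
  have "{1..4::nat} = {1,2,3,4}" by auto
  thus ?thesis by (simp add: add.assoc)
qed

lemma UNIV3: "(UNIV :: (bool\<times>bool\<times>bool) set) =
  {(False,False,False),(False,False,True),(False,True,False),(False,True,True),
   (True,False,False),(True,False,True),(True,True,False),(True,True,True)}"
  by (auto; case_tac a; case_tac aa; case_tac b; auto)

lemma sumU: "(\<Sum>i\<in>(UNIV::(bool\<times>bool\<times>bool) set). f i) =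
  f (False,False,False) + f (False,False,True) + f (False,True,False) + f (False,True,True) +
  f (True,False,False) + f (True,False,True) + f (True,True,False) + f (True,True,True)"
  by (simp add: UNIV3 add.assoc)

lemma ext3: "(\<And>x y z. f (x,y,z) = g (x,y,z)) \<Longrightarrow> f = g" by auto

definition G :: "(nat \<Rightarrow> complex) \<Rightarrow> nat \<Rightarrow> qstate" where
  "G e k = (\<lambda>v.
     if k = 1 then (if v = (False,False,False) then 1 else if v = (True,True,True) then e 1 else 0)
     else if k = 2 then (if v = (False,False,True) then 1 else if v = (True,True,False) then e 2 else 0)
     else if k = 3 then (if v = (False,True,False) then 1 else if v = (True,False,True) then e 3 else 0)
     else if k = 4 then (if v = (False,True,True) then 1 else if v = (True,False,False) then e 4 else 0)
     else 0)"

definition S :: "(nat \<Rightarrow> complex) \<Rightarrow> qstate set" where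
  "S e = {w. w (True,True,True) = e 1 * w (False,False,False) \<and> w (True,True,False) = e 2 * w (False,False,True)
       \<and> w (True,False,True) = e 3 * w (False,True,False) \<and> w (True,False,False) = e 4 * w (False,True,True)}"

lemma Phi_G: "Phi \<theta> = G (\<lambda>k. eith (\<theta> k))"
  by (rule ext, rule ext, auto simp: Phi_def G_def vadd_def vscale_def ket3_def zvec_def)

lemma Psi_G: "Psi \<theta> = G (\<lambda>k. - eith (\<theta> k))"
  by (rule ext, rule ext, auto simp: Psi_def G_def vadd_def vscale_def ket3_def zvec_def)

lemma span_G: "span4 (G e) = S e"
proof
  show "span4 (G e) \<subseteq> S e"
    unfolding span4_def S_def sum14 by (auto simp: G_def algebra_simps)
next
  show "S e \<subseteq> span4 (G e)"
  proof
    fix w assume w: "w \<in> S e"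
    let ?c = "\<lambda>k::nat. if k = 1 then w (False,False,False) else if k = 2 then w (False,False,True)
       else if k = 3 then w (False,True,False) else w (False,True,True)"
    have "w = (\<lambda>i. \<Sum>k\<in>{1..4}. ?c k * G e k i)"
      apply (rule ext3)
      apply (simp only: sum14)
      using w unfolding S_def by (case_tac x; case_tac y; case_tac z; simp add: G_def mult.commute)
    thus "w \<in> span4 (G e)" unfolding span4_def mem_Collect_eq by (rule exI[of _ ?c])
  qed
qed

lemma in14: "k \<in> {1..4::nat} \<Longrightarrow> k = 1 \<or> k = 2 \<or> k = 3 \<or> k = 4" by auto

lemma lin_G: "lin_indep4 (G e)"
  unfolding lin_indep4_def
proof (intro allI impI)
  fix c assume h: "(\<lambda>i. \<Sum>k\<in>{1..4}. c k * G e k i) = zvec"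
  have "\<And>v. (\<Sum>k\<in>{1..4}. c k * G e k v) = 0" using h by (metis zvec_def)
  hence s: "\<And>v. c 1 * G e 1 v + c 2 * G e 2 v + c 3 * G e 3 v + c 4 * G e 4 v = 0"
    by (simp only: sum14)
  from s[of "(False,False,False)"] s[of "(False,False,True)"]
       s[of "(False,True,False)"] s[of "(False,True,True)"]
  have "c 1 = 0" "c 2 = 0" "c 3 = 0" "c 4 = 0" by (simp_all add: G_def)
  thus "\<forall>k\<in>{1..4}. c k = 0" using in14 by blast
qed


lemma cnj_pair: "cnj e * e = 1 \<Longrightarrow> cnj (e*a) * (-e*b) = - (cnj a * b)"
proof -
  assume h: "cnj e * e = 1"
  have "cnj (e*a) * (-e*b) = -((cnj e * e) * (cnj a * b))" by (simp add: ac_simps)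
  thus ?thesis using h by simp
qed

lemma solve_pair: "cnj e * e = 1 \<Longrightarrow> a + cnj e * b = 0 \<Longrightarrow> b = - e * a"
proof -
  assume h: "cnj e * e = 1" and g: "a + cnj e * b = 0"
  have "b = (cnj e * e) * b" using h by simp
  also have "\<dots> = e * (cnj e * b)" by (simp add: ac_simps)
  also have "cnj e * b = - a" using g by (simp add: eq_neg_iff_add_eq_0 add.commute)
  finally show ?thesis by simp
qed

lemma orth_S:
  assumes u1: "cnj (e 1) * e 1 = 1" and u2: "cnj (e 2) * e 2 = 1"
    and u3: "cnj (e 3) * e 3 = 1" and u4: "cnj (e 4) * e 4 = 1"
  shows "orth_compl (S e) = S (\<lambda>k. - e k)"
proof
  show "S (\<lambda>k. - e k) \<subseteq> orth_compl (S e)"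
  proof
    fix y assume y: "y \<in> S (\<lambda>k. - e k)"
    show "y \<in> orth_compl (S e)" unfolding orth_compl_def
    proof
      show "\<forall>x\<in>S e. vinner x y = 0"
      proof
        fix x assume x: "x \<in> S e"
        show "vinner x y = 0" using x y
          unfolding vinner_def sumU S_def mem_Collect_eq
          apply (elim conjE)
          apply (simp only: cnj_pair[OF u1] cnj_pair[OF u2] cnj_pair[OF u3] cnj_pair[OF u4])
          by simp
      qed
    qed
  qed
next
  show "orth_compl (S e) \<subseteq> S (\<lambda>k. - e k)"
  proof
    fix y assume y: "y \<in> orth_compl (S e)"
    have "G e k \<in> S e" for k by (simp add: S_def G_def)
    hence i: "vinner (G e k) y = 0" for k using y by (simp add: orth_compl_def)
    from i[of 1] have 1: "y (False,False,False) + cnj (e 1) * y (True,True,True) = 0"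
      by (simp add: vinner_def sumU G_def)
    from i[of 2] have 2: "y (False,False,True) + cnj (e 2) * y (True,True,False) = 0"
      by (simp add: vinner_def sumU G_def)
    from i[of 3] have 3: "y (False,True,False) + cnj (e 3) * y (True,False,True) = 0"
      by (simp add: vinner_def sumU G_def)
    from i[of 4] have 4: "y (False,True,True) + cnj (e 4) * y (True,False,False) = 0"
      by (simp add: vinner_def sumU G_def)
    show "y \<in> S (\<lambda>k. - e k)" unfolding S_def
      using solve_pair[OF u1 1] solve_pair[OF u2 2] solve_pair[OF u3 3] solve_pair[OF u4 4]
      by simp
  qed
qed

lemma prod_zero:
  fixes a0 a1 b0 b1 c0 c1 e1 e2 e3 e4 :: complex
  assumes ne: "e1 \<noteq> 0" "e2 \<noteq> 0" "e3 \<noteq> 0" "e4 \<noteq> 0" and d: "e1*e4 \<noteq> e2*e3"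
    and eq1: "a1*b1*c1 = e1*(a0*b0*c0)" and eq2: "a1*b1*c0 = e2*(a0*b0*c1)"
    and eq3: "a1*b0*c1 = e3*(a0*b1*c0)" and eq4: "a1*b0*c0 = e4*(a0*b1*c1)"
  shows "a0*b0*c0 = 0 \<and> a0*b0*c1 = 0 \<and> a0*b1*c0 = 0 \<and> a0*b1*c1 = 0 \<and>
         a1*b0*c0 = 0 \<and> a1*b0*c1 = 0 \<and> a1*b1*c0 = 0 \<and> a1*b1*c1 = 0"
proof (cases "b0*b1*c0*c1 = 0")
  case True
  hence "b0 = 0 \<or> b1 = 0 \<or> c0 = 0 \<or> c1 = 0" by simp
  thus ?thesis using eq1 eq2 eq3 eq4 ne by auto
next
  case False
  define X where "X = b0*b1*c0*c1"
  have "(a1*b1*c1)*(a1*b0*c0) = (e1*(a0*b0*c0))*(e4*(a0*b1*c1))" using eq1 eq4 by simp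
  hence h1: "a1*a1*X = e1*e4*(a0*a0*X)" unfolding X_def by (simp add: ac_simps)
  have "(a1*b1*c0)*(a1*b0*c1) = (e2*(a0*b0*c1))*(e3*(a0*b1*c0))" using eq2 eq3 by simp
  hence h2: "a1*a1*X = e2*e3*(a0*a0*X)" unfolding X_def by (simp add: ac_simps)
  have XX: "X \<noteq> 0" using False X_def by simp
  have "e1*e4*(a0*a0*X) = e2*e3*(a0*a0*X)" using h1 h2 by metis
  hence "(e1*e4 - e2*e3)*(a0*a0*X) = 0" by (simp add: left_diff_distrib)
  hence "a0*a0*X = 0" using d by simp
  hence "a0 = 0" using XX by simp
  hence "a1 = 0" using h1 XX by simp
  thus ?thesis using \<open>a0 = 0\<close> by simp
qed

lemma prod_S:
  assumes ne: "e 1 \<noteq> 0" "e 2 \<noteq> 0" "e 3 \<noteq> 0" "e 4 \<noteq> 0" and d: "e 1 * e 4 \<noteq> e 2 * e 3"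
    and w: "w \<in> S e" and p: "is_fully_product w"
  shows "w = zvec"
proof -
  obtain a b c where wp: "w = prodvec a b c" using p unfolding is_fully_product_def by blast
  have "a False * b False * c False = 0 \<and> a False * b False * c True = 0 \<and>
        a False * b True * c False = 0 \<and> a False * b True * c True = 0 \<and>
        a True * b False * c False = 0 \<and> a True * b False * c True = 0 \<and>
        a True * b True * c False = 0 \<and> a True * b True * c True = 0"
    apply (rule prod_zero[OF ne d])
    using w unfolding wp S_def prodvec_def by simp_all
  thus ?thesis unfolding wp zvec_def prodvec_def
    by (intro ext3) (case_tac x; case_tac y; case_tac z; simp)
qed


definition Pr :: "bool \<Rightarrow> qop" where
  "Pr b = (\<lambda>r c. if r = b \<and> c = b then 1 else 0)"

lemma meas_Pr: "complete_meas [Pr False, Pr True]"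
  unfolding complete_meas_def by (auto simp: Pr_def UNIV_bool numeral_2_eq_2)

lemma app0: "apply_local 0 (Pr b) \<psi> = (\<lambda>(x,y,z). if x = b then \<psi> (x,y,z) else 0)"
  by (rule ext3) (auto simp: apply_local_def Pr_def UNIV_bool)
lemma app1: "apply_local 1 (Pr b) \<psi> = (\<lambda>(x,y,z). if y = b then \<psi> (x,y,z) else 0)"
  by (rule ext3) (auto simp: apply_local_def Pr_def UNIV_bool)
lemma app2: "apply_local 2 (Pr b) \<psi> = (\<lambda>(x,y,z). if z = b then \<psi> (x,y,z) else 0)"
  by (rule ext3) (auto simp: apply_local_def Pr_def UNIV_bool)

definition lab :: "bool \<Rightarrow> bool \<Rightarrow> bool \<Rightarrow> nat" where
  "lab x y z = (if x = y \<and> y = z then 1 else if x = y then 2 else if x = z then 3 else 4)"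

definition T :: locc where
  "T = Meas 0 (map (\<lambda>x. (Pr x, Meas 1 (map (\<lambda>y. (Pr y, Meas 2 (map (\<lambda>z. (Pr z, Guess (lab x y z)))
         [False, True]))) [False, True]))) [False, True])"

lemma wf_T: "wf_locc T"
  by (simp add: T_def meas_Pr)

lemma comp: "apply_local 2 (Pr z) (apply_local (Suc 0) (Pr y) (apply_local 0 (Pr x) \<psi>))
   = (\<lambda>v. if v = (x,y,z) then \<psi> v else 0)"
  by (rule ext3) (auto simp: apply_local_def Pr_def UNIV_bool)

lemma ident_T:
  assumes "\<And>x y z. \<psi> (x,y,z) = 0 \<or> lab x y z = k"
  shows "locc_identifies T k \<psi>"
proof -
  have "(\<lambda>v. if v = (x,y,z) then \<psi> v else 0) = zvec \<or> lab x y z = k" for x y z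
  proof (cases "\<psi> (x,y,z) = 0")
    case True
    show ?thesis unfolding zvec_def using True by (intro disjI1 ext3) auto
  next
    case False thus ?thesis using assms by blast
  qed
  hence "\<And>x y z. locc_identifies (Guess (lab x y z)) k (\<lambda>v. if v = (x,y,z) then \<psi> v else 0)"
    by simp
  thus ?thesis unfolding T_def by (simp del: locc_identifies.simps(1) add: comp)
qed

lemma T_Phi: "k \<in> {1..4} \<Longrightarrow> locc_identifies T k (vscale s (Phi \<theta> k))"
  apply (rule ident_T)
  apply (drule in14)
  by (case_tac x; case_tac y; case_tac z; auto simp: vscale_def Phi_def vadd_def ket3_def lab_def)


theorem mainTheorem10:
  fixes \<theta> :: "nat \<Rightarrow> real"
  assumes "0 \<le> \<theta> 1" and "\<theta> 1 \<le> \<theta> 2" and "\<theta> 2 \<le> \<theta> 3" and "\<theta> 3 \<le> \<theta> 4"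
    and "\<theta> 4 < 2 * pi"
    and "\<theta> 4 - \<theta> 3 \<noteq> \<theta> 2 - \<theta> 1"
  shows "orth_compl (span4 (Phi \<theta>)) = span4 (Psi \<theta>)
     \<and> (\<forall>w\<in>span4 (Phi \<theta>). is_fully_product w \<longrightarrow> w = zvec)
     \<and> (\<forall>w\<in>span4 (Psi \<theta>). is_fully_product w \<longrightarrow> w = zvec)
     \<and> unextendible_basis4 (Phi \<theta>) \<and> unextendible_basis4 (Psi \<theta>)
     \<and> perfectly_LOCC_distinguishable {1..4}
         (\<lambda>k. vscale (complex_of_real (1 / sqrt 2)) (Phi \<theta> k))"
proof -
  define e where "e = (\<lambda>k. eith (\<theta> k))"
  define f where "f = (\<lambda>k. - e k)"
  have u: "cnj (e k) * e k = 1" for k unfolding e_def by (rule eith_unit)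
  have uf: "cnj (f k) * f k = 1" for k unfolding f_def using u[of k] by simp
  have ne: "e k \<noteq> 0" for k using u[of k] by auto
  have nf: "f k \<noteq> 0" for k unfolding f_def using ne[of k] by simp
  have d: "e 1 * e 4 \<noteq> e 2 * e 3" unfolding e_def
    by (rule eith_ne[OF refl refl refl refl assms])
  have df: "f 1 * f 4 \<noteq> f 2 * f 3" unfolding f_def using d by simp
  have ff: "(\<lambda>k. - f k) = e" unfolding f_def by simp
  have sPhi: "span4 (Phi \<theta>) = S e" unfolding Phi_G e_def by (rule span_G)
  have sPsi: "span4 (Psi \<theta>) = S f" unfolding Psi_G f_def e_def by (rule span_G)
  have o1: "orth_compl (S e) = S f" unfolding f_def by (rule orth_S[OF u u u u])
  have o2: "orth_compl (S f) = S e" using orth_S[OF uf uf uf uf] ff by simp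
  have p1: "\<forall>w\<in>S e. is_fully_product w \<longrightarrow> w = zvec"
    using prod_S[OF ne ne ne ne d] by blast
  have p2: "\<forall>w\<in>S f. is_fully_product w \<longrightarrow> w = zvec"
    using prod_S[OF nf nf nf nf df] by blast
  have l1: "lin_indep4 (Phi \<theta>)" unfolding Phi_G by (rule lin_G)
  have l2: "lin_indep4 (Psi \<theta>)" unfolding Psi_G by (rule lin_G)
  have loc: "perfectly_LOCC_distinguishable {1..4}
         (\<lambda>k. vscale (complex_of_real (1 / sqrt 2)) (Phi \<theta> k))"
    unfolding perfectly_LOCC_distinguishable_def using wf_T T_Phi by blast
  show ?thesis
    unfolding unextendible_basis4_def sPhi sPsi o1 o2
    using p1 p2 l1 l2 loc by blast
qed

end
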